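(* Let $n\ge1$, $I=\{1,\dots,n\}$, let $A=(a_{ij})_{n\times n}$ be a symmetric real matrix with $a_{ij}\ge0$ for all $i,j$, let $\boldsymbol\beta=(\beta_1,\dots,\beta_n)$, $\beta_i>0$, satisfy $\Lambda_I(\boldsymbol\beta)=0$ and $\Lambda_J(\boldsymbol\beta)>0$ for all $\emptyset\ne J\subsetneq I$, and let $\boldsymbol v=(v_1,\dots,v_n)\in(\mathbb R^2)^n$. Then $$\inf_{\boldsymbol\rho\in\Gamma^{\boldsymbol\beta}}\mathcal F_{\boldsymbol v}(\boldsymbol\rho)\le\inf_{\boldsymbol\rho\in\Gamma^{\boldsymbol\beta}}\mathcal F_0(\boldsymbol\rho)+\min_{x_0\in\mathbb R^2}\sum_{i=1}^n\frac12\beta_i|x_0-v_i|^2.$$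
   Context: For $\emptyset\ne J\subseteq I$, $\Lambda_J(\boldsymbol\beta)=\sum_{i\in J}\beta_i\big(8\pi-\sum_{j\in J}a_{ij}\beta_j\big)$. $\Gamma^{\boldsymbol\beta}$ is the set of $n$-tuples $\boldsymbol\rho=(\rho_1,\dots,\rho_n)$ of measurable functions on $\mathbb R^2$ with $\rho_i\ge0$, $\int\rho_i\ln\rho_i<\infty$, $\int|x|^2\rho_i<\infty$, $\int\rho_i=\beta_i$ for all $i$. $\mathcal F_{\boldsymbol v}(\boldsymbol\rho)=\sum_{i=1}^n\int_{\mathbb R^2}\rho_i\ln\rho_i+\frac1{4\pi}\sum_{i,j=1}^na_{ij}\int\int\rho_i(x)\ln|x-y|\rho_j(y)\,d^2x\,d^2y+\sum_{i=1}^n\frac12\int_{\mathbb R^2}|x-v_i|^2\rho_i(x)\,d^2x$, and $\mathcal F_0$ denotes $\mathcal F_{\boldsymbol v}$ with $v_1=\dots=v_n=0$. *)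

theory Defs
  imports "HOL-Analysis.Analysis"
begin

definition Lambda :: "(nat \<Rightarrow> nat \<Rightarrow> real) \<Rightarrow> nat set \<Rightarrow> (nat \<Rightarrow> real) \<Rightarrow> real" where
  "Lambda a J \<beta> = (\<Sum>i\<in>J. \<beta> i * (8 * pi - (\<Sum>j\<in>J. a i j * \<beta> j)))"

definition Gamma :: "nat \<Rightarrow> (nat \<Rightarrow> real) \<Rightarrow> (nat \<Rightarrow> real^2 \<Rightarrow> real) set" where
  "Gamma n \<beta> = {\<rho>. \<forall>i\<in>{1..n}.
      \<rho> i \<in> borel_measurable lborel \<and>
      (\<forall>x. 0 \<le> \<rho> i x) \<and>
      integrable lborel (\<lambda>x. \<rho> i x * ln (\<rho> i x)) \<and>
      integrable lborel (\<lambda>x. norm x ^ 2 * \<rho> i x) \<and>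
      integrable lborel (\<rho> i) \<and>
      integral\<^sup>L lborel (\<rho> i) = \<beta> i}"

definition F :: "nat \<Rightarrow> (nat \<Rightarrow> nat \<Rightarrow> real) \<Rightarrow> (nat \<Rightarrow> real^2) \<Rightarrow> (nat \<Rightarrow> real^2 \<Rightarrow> real) \<Rightarrow> real" where
  "F n a v \<rho> =
     (\<Sum>i=1..n. \<integral>x. \<rho> i x * ln (\<rho> i x) \<partial>lborel)
   + 1 / (4 * pi) * (\<Sum>i=1..n. \<Sum>j=1..n. a i j *
        (\<integral>z. \<rho> i (fst z) * ln (dist (fst z) (snd z)) * \<rho> j (snd z) \<partial>(lborel \<Otimes>\<^sub>M lborel)))
   + (\<Sum>i=1..n. \<integral>x. 1/2 * norm (x - v i) ^ 2 * \<rho> i x \<partial>lborel)"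

end

theory Submission
  imports Defs
begin

lemma distr_T:
  fixes c :: "real^2" and s :: real
  assumes "s * s = 1"
  shows "distr lborel borel (\<lambda>x. c + s *\<^sub>R x) = lborel"
proof -
  have s0: "s \<noteq> 0" using assms by auto
  have "\<bar>s\<bar> = 1" using assms square_eq_1_iff[of s] by auto
  then show ?thesis
    using lborel_affine[OF s0, of c] by (simp add: density_1)
qed

lemma integral_T:
  fixes c :: "real^2" and s :: real and g :: "real^2 \<Rightarrow> real"
  assumes "s * s = 1" "g \<in> borel_measurable borel"
  shows "integral\<^sup>L lborel (\<lambda>x. g (c + s *\<^sub>R x)) = integral\<^sup>L lborel g"
  using integral_distr[of "\<lambda>x. c + s *\<^sub>R x" lborel borel g] assms distr_T[OF assms(1), of c]
  by simp

lemma integrable_T: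
  fixes c :: "real^2" and s :: real and g :: "real^2 \<Rightarrow> real"
  assumes "s * s = 1" "g \<in> borel_measurable borel"
  shows "integrable lborel (\<lambda>x. g (c + s *\<^sub>R x)) = integrable lborel g"
  using integrable_distr_eq[of "\<lambda>x. c + s *\<^sub>R x" lborel borel g] assms distr_T[OF assms(1), of c]
  by simp

lemma distr_T2:
  fixes c :: "real^2" and s :: real
  assumes "s * s = 1"
  shows "distr (lborel \<Otimes>\<^sub>M lborel) (borel \<Otimes>\<^sub>M borel) (\<lambda>(x,y). (c + s *\<^sub>R x, c + s *\<^sub>R y)) = lborel \<Otimes>\<^sub>M lborel"
proof -
  have "distr lborel borel (\<lambda>x. c + s *\<^sub>R x) \<Otimes>\<^sub>M distr lborel borel (\<lambda>x. c + s *\<^sub>R x)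
    = distr (lborel \<Otimes>\<^sub>M lborel) (borel \<Otimes>\<^sub>M borel) (\<lambda>(x,y). (c + s *\<^sub>R x, c + s *\<^sub>R y))"
    by (rule pair_measure_distr) (simp_all add: distr_T[OF assms] lborel.sigma_finite_measure_axioms)
  then show ?thesis by (simp add: distr_T[OF assms])
qed

lemma T_meas: "(\<lambda>x::real^2. c + s *\<^sub>R x) \<in> borel_measurable borel"
  by (intro borel_measurable_continuous_onI continuous_on_add continuous_on_const continuous_on_scaleR continuous_on_id)

lemma T2_meas: "(\<lambda>z. (c + s *\<^sub>R fst z, c + s *\<^sub>R snd z)) \<in> measurable (lborel \<Otimes>\<^sub>M lborel) (borel \<Otimes>\<^sub>M (borel::(real^2) measure))"
      apply (rule measurable_Pair)
       apply (rule measurable_compose[OF measurable_fst]) apply (simp add: T_meas)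
      apply (rule measurable_compose[OF measurable_snd]) apply (simp add: T_meas)
      done

lemma integral_T2:
  fixes c :: "real^2" and s :: real and g :: "(real^2) \<times> (real^2) \<Rightarrow> real"
  assumes "s * s = 1" "g \<in> borel_measurable (borel \<Otimes>\<^sub>M borel)"
  shows "integral\<^sup>L (lborel \<Otimes>\<^sub>M lborel) (\<lambda>z. g (c + s *\<^sub>R fst z, c + s *\<^sub>R snd z)) = integral\<^sup>L (lborel \<Otimes>\<^sub>M lborel) g"
proof -
  have eq: "(\<lambda>(x,y). (c + s *\<^sub>R x, c + s *\<^sub>R y)) = (\<lambda>z. (c + s *\<^sub>R fst z, c + s *\<^sub>R snd z))"
    by (auto simp: fun_eq_iff)
  have d: "distr (lborel \<Otimes>\<^sub>M lborel) (borel \<Otimes>\<^sub>M borel) (\<lambda>z. (c + s *\<^sub>R fst z, c + s *\<^sub>R snd z)) = lborel \<Otimes>\<^sub>M lborel"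
    using distr_T2[OF assms(1), of c] unfolding eq .
  have "integral\<^sup>L (lborel \<Otimes>\<^sub>M lborel) g = integral\<^sup>L (distr (lborel \<Otimes>\<^sub>M lborel) (borel \<Otimes>\<^sub>M borel) (\<lambda>z. (c + s *\<^sub>R fst z, c + s *\<^sub>R snd z))) g"
    unfolding d ..
  also have "\<dots> = integral\<^sup>L (lborel \<Otimes>\<^sub>M lborel) (\<lambda>z. g (c + s *\<^sub>R fst z, c + s *\<^sub>R snd z))"
    by (rule integral_distr[OF T2_meas assms(2)])
  finally show ?thesis by (rule sym)
qed


lemma quad_int:
  fixes f :: "real^2 \<Rightarrow> real" and t :: real and w :: "real^2"
  assumes m: "f \<in> borel_measurable borel" and nn: "\<forall>x. 0 \<le> f x"
    and ir: "integrable lborel f" and q: "integrable lborel (\<lambda>x. norm x ^ 2 * f x)"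
  shows "integrable lborel (\<lambda>u. norm (t *\<^sub>R u + w) ^ 2 * f u)"
proof (rule Bochner_Integration.integrable_bound)
  show "integrable lborel (\<lambda>u. (2*t^2) * (norm u ^ 2 * f u) + (2 * norm w ^ 2) * f u)"
    using ir q by auto
  show "(\<lambda>u. norm (t *\<^sub>R u + w) ^ 2 * f u) \<in> borel_measurable lborel"
    using m by measurable
  show "AE x in lborel. norm (norm (t *\<^sub>R x + w) ^ 2 * f x) \<le> norm ((2*t^2) * (norm x ^ 2 * f x) + (2 * norm w ^ 2) * f x)"
  proof (rule AE_I2)
    fix x
    have f0: "0 \<le> f x" using nn by auto
    have "norm (t *\<^sub>R x + w) \<le> \<bar>t\<bar> * norm x + norm w"
      by (metis norm_scaleR norm_triangle_ineq)
    then have "norm (t *\<^sub>R x + w) ^ 2 \<le> (\<bar>t\<bar> * norm x + norm w) ^ 2"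
      by (simp add: power_mono)
    also have "\<dots> \<le> 2*t^2 * norm x ^ 2 + 2 * norm w ^ 2"
    proof -
      have "(\<bar>t\<bar> * norm x + norm w) ^ 2 \<le> 2 * (\<bar>t\<bar> * norm x)^2 + 2 * norm w ^ 2"
        using power2_sum[of "\<bar>t\<bar> * norm x" "norm w"] power2_diff[of "\<bar>t\<bar> * norm x" "norm w"]
          zero_le_power2[of "\<bar>t\<bar> * norm x - norm w"] by linarith
      moreover have "(\<bar>t\<bar> * norm x)^2 = t^2 * norm x ^ 2" by (simp add: power_mult_distrib)
      ultimately show ?thesis by simp
    qed
    finally have "norm (t *\<^sub>R x + w) ^ 2 * f x \<le> (2*t^2 * norm x ^ 2 + 2 * norm w ^ 2) * f x"
      using f0 by (simp add: mult_right_mono)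
    then show "norm (norm (t *\<^sub>R x + w) ^ 2 * f x) \<le> norm ((2*t^2) * (norm x ^ 2 * f x) + (2 * norm w ^ 2) * f x)"
      using f0 by (simp add: algebra_simps)
  qed
qed


lemma Gamma_D:
  assumes "\<rho> \<in> Gamma n \<beta>" "i \<in> {1..n}"
  shows "\<rho> i \<in> borel_measurable borel" "\<forall>x. 0 \<le> \<rho> i x"
    "integrable lborel (\<lambda>x. \<rho> i x * ln (\<rho> i x))"
    "integrable lborel (\<lambda>x. norm x ^ 2 * \<rho> i x)"
    "integrable lborel (\<rho> i)" "integral\<^sup>L lborel (\<rho> i) = \<beta> i"
  using assms unfolding Gamma_def by auto

lemma Gamma_T:
  fixes c :: "real^2" and s :: real
  assumes s: "s * s = 1" and r: "\<rho> \<in> Gamma n \<beta>"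
  shows "(\<lambda>i x. \<rho> i (c + s *\<^sub>R x)) \<in> Gamma n \<beta>"
  unfolding Gamma_def
proof (intro CollectI ballI conjI)
  fix i assume i: "i \<in> {1..n}"
  note G = Gamma_D[OF r i]
  have m[measurable]: "\<rho> i \<in> borel_measurable borel" by (rule G(1))
  show "(\<lambda>x. \<rho> i (c + s *\<^sub>R x)) \<in> borel_measurable lborel"
    using measurable_compose[OF T_meas m] by simp
  show "\<forall>x. 0 \<le> \<rho> i (c + s *\<^sub>R x)" using G(2) by auto
  have me: "(\<lambda>x. \<rho> i x * ln (\<rho> i x)) \<in> borel_measurable borel" by measurable
  show "integrable lborel (\<lambda>x. \<rho> i (c + s *\<^sub>R x) * ln (\<rho> i (c + s *\<^sub>R x)))"
    using integrable_T[OF s me, of c] G(3) by simp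
  show "integrable lborel (\<lambda>x. \<rho> i (c + s *\<^sub>R x))"
    using integrable_T[OF s m, of c] G(5) by simp
  show "integral\<^sup>L lborel (\<lambda>x. \<rho> i (c + s *\<^sub>R x)) = \<beta> i"
    using integral_T[OF s m, of c] G(6) by simp
  have mq: "(\<lambda>u. norm (s *\<^sub>R u + - (s *\<^sub>R c)) ^ 2 * \<rho> i u) \<in> borel_measurable borel" by measurable
  have iq: "integrable lborel (\<lambda>u. norm (s *\<^sub>R u + - (s *\<^sub>R c)) ^ 2 * \<rho> i u)"
    using quad_int[OF m G(2) G(5) G(4)] .
  have eq: "\<And>x. s *\<^sub>R (c + s *\<^sub>R x) + - (s *\<^sub>R c) = x"
    using s by (simp add: algebra_simps)
  show "integrable lborel (\<lambda>x. norm x ^ 2 * \<rho> i (c + s *\<^sub>R x))"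
    using integrable_T[OF s mq, of c, unfolded eq] iq by simp
qed


lemma F_T:
  fixes c :: "real^2" and s :: real
  assumes s: "s * s = 1" and r: "\<rho> \<in> Gamma n \<beta>"
  shows "F n a v (\<lambda>i x. \<rho> i (c + s *\<^sub>R x)) =
     (\<Sum>i=1..n. \<integral>x. \<rho> i x * ln (\<rho> i x) \<partial>lborel)
   + 1 / (4 * pi) * (\<Sum>i=1..n. \<Sum>j=1..n. a i j *
        (\<integral>z. \<rho> i (fst z) * ln (dist (fst z) (snd z)) * \<rho> j (snd z) \<partial>(lborel \<Otimes>\<^sub>M lborel)))
   + (\<Sum>i=1..n. \<integral>u. 1/2 * norm (s *\<^sub>R u + - (s *\<^sub>R c) - v i) ^ 2 * \<rho> i u \<partial>lborel)"
proof -
  have abs_s: "\<bar>s\<bar> = 1" using s square_eq_1_iff[of s] by auto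
  have eq: "\<And>x. s *\<^sub>R (c + s *\<^sub>R x) + - (s *\<^sub>R c) = x"
    using s by (simp add: algebra_simps)
  have eqd: "\<And>x y. dist (c + s *\<^sub>R x) (c + s *\<^sub>R y) = dist x y"
  proof -
    fix x y :: "real^2"
    have "(c + s *\<^sub>R x) - (c + s *\<^sub>R y) = s *\<^sub>R (x - y)" by (simp add: algebra_simps)
    then show "dist (c + s *\<^sub>R x) (c + s *\<^sub>R y) = dist x y"
      by (simp add: dist_norm abs_s)
  qed
  have E: "(\<integral>x. \<rho> i (c + s *\<^sub>R x) * ln (\<rho> i (c + s *\<^sub>R x)) \<partial>lborel) = (\<integral>x. \<rho> i x * ln (\<rho> i x) \<partial>lborel)"
    if i: "i \<in> {1..n}" for i
  proof -
    have m[measurable]: "\<rho> i \<in> borel_measurable borel" by (rule Gamma_D(1)[OF r i])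
    have me: "(\<lambda>x. \<rho> i x * ln (\<rho> i x)) \<in> borel_measurable borel" by measurable
    show ?thesis using integral_T[OF s me, of c] by simp
  qed
  have P: "(\<integral>x. 1/2 * norm (x - v i) ^ 2 * \<rho> i (c + s *\<^sub>R x) \<partial>lborel) = (\<integral>u. 1/2 * norm (s *\<^sub>R u + - (s *\<^sub>R c) - v i) ^ 2 * \<rho> i u \<partial>lborel)"
    if i: "i \<in> {1..n}" for i
  proof -
    have m[measurable]: "\<rho> i \<in> borel_measurable borel" by (rule Gamma_D(1)[OF r i])
    have me: "(\<lambda>u. 1/2 * norm (s *\<^sub>R u + - (s *\<^sub>R c) - v i) ^ 2 * \<rho> i u) \<in> borel_measurable borel" by measurable
    show ?thesis using integral_T[OF s me, of c, unfolded eq] by simp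
  qed
  have I: "(\<integral>z. \<rho> i (c + s *\<^sub>R fst z) * ln (dist (fst z) (snd z)) * \<rho> j (c + s *\<^sub>R snd z) \<partial>(lborel \<Otimes>\<^sub>M lborel))
      = (\<integral>z. \<rho> i (fst z) * ln (dist (fst z) (snd z)) * \<rho> j (snd z) \<partial>(lborel \<Otimes>\<^sub>M lborel))"
    if i: "i \<in> {1..n}" and j: "j \<in> {1..n}" for i j
  proof -
    have mi[measurable]: "\<rho> i \<in> borel_measurable borel" by (rule Gamma_D(1)[OF r i])
    have mj[measurable]: "\<rho> j \<in> borel_measurable borel" by (rule Gamma_D(1)[OF r j])
    have me: "(\<lambda>z::(real^2)\<times>(real^2). \<rho> i (fst z) * ln (dist (fst z) (snd z)) * \<rho> j (snd z)) \<in> borel_measurable (borel \<Otimes>\<^sub>M borel)" by measurable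
    show ?thesis using integral_T2[OF s me, of c, unfolded fst_conv snd_conv eqd] by simp
  qed
  have S1: "(\<Sum>i=1..n. \<integral>x. \<rho> i (c + s *\<^sub>R x) * ln (\<rho> i (c + s *\<^sub>R x)) \<partial>lborel) = (\<Sum>i=1..n. \<integral>x. \<rho> i x * ln (\<rho> i x) \<partial>lborel)"
    by (rule sum.cong[OF refl], rule E)
  have S3: "(\<Sum>i=1..n. \<integral>x. 1/2 * norm (x - v i) ^ 2 * \<rho> i (c + s *\<^sub>R x) \<partial>lborel) = (\<Sum>i=1..n. \<integral>u. 1/2 * norm (s *\<^sub>R u + - (s *\<^sub>R c) - v i) ^ 2 * \<rho> i u \<partial>lborel)"
    by (rule sum.cong[OF refl], rule P)
  have S2: "(\<Sum>i=1..n. \<Sum>j=1..n. a i j * (\<integral>z. \<rho> i (c + s *\<^sub>R fst z) * ln (dist (fst z) (snd z)) * \<rho> j (c + s *\<^sub>R snd z) \<partial>(lborel \<Otimes>\<^sub>M lborel)))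
     = (\<Sum>i=1..n. \<Sum>j=1..n. a i j * (\<integral>z. \<rho> i (fst z) * ln (dist (fst z) (snd z)) * \<rho> j (snd z) \<partial>(lborel \<Otimes>\<^sub>M lborel)))"
    by (intro sum.cong refl arg_cong[where f="\<lambda>t. a _ _ * t"] I)
  show ?thesis unfolding F_def S1 S2 S3 ..
qed


lemma parallelogram2:
  fixes u w :: "real^2"
  shows "norm (u + w) ^ 2 + norm (-u + w) ^ 2 = 2 * norm u ^ 2 + 2 * norm w ^ 2"
  by (simp add: power2_norm_eq_inner inner_add_left inner_add_right inner_diff_left inner_diff_right inner_commute)

lemma pot_i:
  fixes x0 :: "real^2" and v :: "real^2" and f :: "real^2 \<Rightarrow> real"
  assumes m: "f \<in> borel_measurable borel" and nn: "\<forall>x. 0 \<le> f x"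
    and ir: "integrable lborel f" and q: "integrable lborel (\<lambda>x. norm x ^ 2 * f x)"
    and b: "integral\<^sup>L lborel f = b"
  shows "(\<integral>u. 1/2 * norm (1 *\<^sub>R u + - (1 *\<^sub>R (-x0)) - v) ^ 2 * f u \<partial>lborel)
       + (\<integral>u. 1/2 * norm ((-1) *\<^sub>R u + - ((-1) *\<^sub>R x0) - v) ^ 2 * f u \<partial>lborel)
     = 2 * (\<integral>u. 1/2 * norm (u - 0) ^ 2 * f u \<partial>lborel) + 2 * (1/2 * b * norm (x0 - v) ^ 2)"
proof -
  define w where "w = x0 - v"
  have e1: "(\<lambda>u. 1/2 * norm (1 *\<^sub>R u + - (1 *\<^sub>R (-x0)) - v) ^ 2 * f u) = (\<lambda>u. 1/2 * (norm (1 *\<^sub>R u + w) ^ 2 * f u))"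
    unfolding w_def by (auto simp: fun_eq_iff algebra_simps)
  have e2: "(\<lambda>u. 1/2 * norm ((-1) *\<^sub>R u + - ((-1) *\<^sub>R x0) - v) ^ 2 * f u) = (\<lambda>u. 1/2 * (norm ((-1) *\<^sub>R u + w) ^ 2 * f u))"
    unfolding w_def by (auto simp: fun_eq_iff algebra_simps)
  have e0: "(\<lambda>u. 1/2 * norm (u - 0) ^ 2 * f u) = (\<lambda>u. 1/2 * (norm u ^ 2 * f u))"
    by (auto simp: fun_eq_iff)
  have i1: "integrable lborel (\<lambda>u. norm (1 *\<^sub>R u + w) ^ 2 * f u)" by (rule quad_int[OF m nn ir q])
  have i2: "integrable lborel (\<lambda>u. norm ((-1) *\<^sub>R u + w) ^ 2 * f u)" by (rule quad_int[OF m nn ir q])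
  have pw: "(\<lambda>u. norm (1 *\<^sub>R u + w) ^ 2 * f u + norm ((-1) *\<^sub>R u + w) ^ 2 * f u)
      = (\<lambda>u. 2 * (norm u ^ 2 * f u) + 2 * norm w ^ 2 * f u)"
  proof
    fix u
    have "norm (1 *\<^sub>R u + w) ^ 2 + norm ((-1) *\<^sub>R u + w) ^ 2 = 2 * norm u ^ 2 + 2 * norm w ^ 2"
      using parallelogram2[of u w] by simp
    then show "norm (1 *\<^sub>R u + w) ^ 2 * f u + norm ((-1) *\<^sub>R u + w) ^ 2 * f u
      = 2 * (norm u ^ 2 * f u) + 2 * norm w ^ 2 * f u"
      by (metis (no_types, lifting) distrib_right mult.assoc)
  qed
  have "(\<integral>u. 1/2 * (norm (1 *\<^sub>R u + w) ^ 2 * f u) \<partial>lborel) + (\<integral>u. 1/2 * (norm ((-1) *\<^sub>R u + w) ^ 2 * f u) \<partial>lborel)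
     = 1/2 * ((\<integral>u. norm (1 *\<^sub>R u + w) ^ 2 * f u \<partial>lborel) + (\<integral>u. norm ((-1) *\<^sub>R u + w) ^ 2 * f u \<partial>lborel))"
    by simp
  also have "\<dots> = 1/2 * (\<integral>u. norm (1 *\<^sub>R u + w) ^ 2 * f u + norm ((-1) *\<^sub>R u + w) ^ 2 * f u \<partial>lborel)"
    using Bochner_Integration.integral_add[OF i1 i2] by simp
  also have "\<dots> = 1/2 * (\<integral>u. 2 * (norm u ^ 2 * f u) + 2 * norm w ^ 2 * f u \<partial>lborel)"
    unfolding pw ..
  also have "\<dots> = 1/2 * (2 * (\<integral>u. norm u ^ 2 * f u \<partial>lborel) + 2 * norm w ^ 2 * b)"
    using q ir b by simp
  also have "\<dots> = 2 * (1/2 * (\<integral>u. norm u ^ 2 * f u \<partial>lborel)) + 2 * (1/2 * b * norm w ^ 2)"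
    by (simp add: algebra_simps)
  finally show ?thesis unfolding e1 e2 e0 w_def by simp
qed


lemma key:
  fixes x0 :: "real^2"
  assumes r: "\<rho> \<in> Gamma n \<beta>"
  shows "F n a v (\<lambda>i x. \<rho> i (-x0 + 1 *\<^sub>R x)) + F n a v (\<lambda>i x. \<rho> i (x0 + (-1) *\<^sub>R x))
    = 2 * F n a (\<lambda>_. 0) \<rho> + 2 * (\<Sum>i=1..n. 1/2 * \<beta> i * norm (x0 - v i) ^ 2)"
proof -
  have p: "(\<integral>u. 1/2 * norm (1 *\<^sub>R u + - (1 *\<^sub>R (-x0)) - v i) ^ 2 * \<rho> i u \<partial>lborel)
       + (\<integral>u. 1/2 * norm ((-1) *\<^sub>R u + - ((-1) *\<^sub>R x0) - v i) ^ 2 * \<rho> i u \<partial>lborel)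
     = 2 * (\<integral>u. 1/2 * norm (u - 0) ^ 2 * \<rho> i u \<partial>lborel) + 2 * (1/2 * \<beta> i * norm (x0 - v i) ^ 2)"
    if i: "i \<in> {1..n}" for i
    using Gamma_D[OF r i] by (intro pot_i) auto
  have S: "(\<Sum>i=1..n. \<integral>u. 1/2 * norm (1 *\<^sub>R u + - (1 *\<^sub>R (-x0)) - v i) ^ 2 * \<rho> i u \<partial>lborel)
       + (\<Sum>i=1..n. \<integral>u. 1/2 * norm ((-1) *\<^sub>R u + - ((-1) *\<^sub>R x0) - v i) ^ 2 * \<rho> i u \<partial>lborel)
     = 2 * (\<Sum>i=1..n. \<integral>u. 1/2 * norm (u - (\<lambda>_. 0) i) ^ 2 * \<rho> i u \<partial>lborel) + 2 * (\<Sum>i=1..n. 1/2 * \<beta> i * norm (x0 - v i) ^ 2)"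
    unfolding sum.distrib[symmetric] sum_distrib_left
    by (rule sum.cong[OF refl]) (erule p)
  have o1: "(1::real) * 1 = 1" by simp
  have o2: "(-1::real) * (-1) = 1" by simp
  show ?thesis
    unfolding F_T[where s=1 and c="-x0" and a=a and v=v, OF o1 r] F_T[where s="-1" and c=x0 and a=a and v=v, OF o2 r]
    using S unfolding F_def by (simp add: algebra_simps)
qed


theorem lemma7:
  fixes n :: nat and a :: "nat \<Rightarrow> nat \<Rightarrow> real" and \<beta> :: "nat \<Rightarrow> real"
    and v :: "nat \<Rightarrow> real^2"
  assumes "n \<ge> 1"
    and "\<forall>i\<in>{1..n}. \<forall>j\<in>{1..n}. a i j = a j i"
    and "\<forall>i\<in>{1..n}. \<forall>j\<in>{1..n}. a i j \<ge> 0"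
    and "\<forall>i\<in>{1..n}. \<beta> i > 0"
    and "Lambda a {1..n} \<beta> = 0"
    and "\<forall>J. J \<noteq> {} \<and> J \<subset> {1..n} \<longrightarrow> Lambda a J \<beta> > 0"
  shows "(INF \<rho>\<in>Gamma n \<beta>. ereal (F n a v \<rho>))
         \<le> (INF \<rho>\<in>Gamma n \<beta>. ereal (F n a (\<lambda>_. 0) \<rho>))
           + ereal (INF x0. (\<Sum>i=1..n. 1/2 * \<beta> i * norm (x0 - v i) ^ 2))"
proof -
  define h where "h = (\<lambda>x0::real^2. \<Sum>i=1..n. 1/2 * \<beta> i * norm (x0 - v i) ^ 2)"
  define L where "L = (INF \<rho>\<in>Gamma n \<beta>. ereal (F n a v \<rho>))"
  define R0 where "R0 = (INF \<rho>\<in>Gamma n \<beta>. ereal (F n a (\<lambda>_. 0) \<rho>))"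
  define H where "H = (INF x0. h x0)"
  have hnn: "0 \<le> h x0" for x0
    unfolding h_def
  proof (intro sum_nonneg)
    fix i assume "i \<in> {1..n}"
    then have "0 < \<beta> i" using assms(4) by blast
    then show "0 \<le> 1/2 * \<beta> i * norm (x0 - v i) ^ 2" by simp
  qed
  have bdd: "bdd_below (range h)" by (rule bdd_belowI[of _ 0]) (auto simp: hnn)
  have step1: "L \<le> ereal (F n a (\<lambda>_. 0) \<rho> + h x0)" if r: "\<rho> \<in> Gamma n \<beta>" for \<rho> x0
  proof -
    let ?r1 = "\<lambda>i x. \<rho> i (-x0 + 1 *\<^sub>R x)"
    let ?r2 = "\<lambda>i x. \<rho> i (x0 + (-1) *\<^sub>R x)"
    have g1: "?r1 \<in> Gamma n \<beta>" by (rule Gamma_T[OF _ r]) simp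
    have g2: "?r2 \<in> Gamma n \<beta>" by (rule Gamma_T[OF _ r]) simp
    have k: "F n a v ?r1 + F n a v ?r2 = 2 * F n a (\<lambda>_. 0) \<rho> + 2 * h x0"
      unfolding h_def by (rule key[OF r])
    have "L \<le> ereal (F n a v ?r1)" unfolding L_def by (rule INF_lower[OF g1])
    moreover have "L \<le> ereal (F n a v ?r2)" unfolding L_def by (rule INF_lower[OF g2])
    moreover have "min (F n a v ?r1) (F n a v ?r2) \<le> F n a (\<lambda>_. 0) \<rho> + h x0" using k by linarith
    ultimately show ?thesis
      by (metis (no_types, lifting) dual_order.trans ereal_less_eq(3) min_def)
  qed
  have step2: "L \<le> ereal (F n a (\<lambda>_. 0) \<rho> + H)" if r: "\<rho> \<in> Gamma n \<beta>" for \<rho>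
  proof (cases L)
    case (real l)
    have "l - F n a (\<lambda>_. 0) \<rho> \<le> h x0" for x0 using step1[OF r, of x0] real by simp
    then have "l - F n a (\<lambda>_. 0) \<rho> \<le> H" unfolding H_def by (intro cINF_greatest) auto
    then show ?thesis using real by simp
  next
    case PInf
    then show ?thesis using step1[OF r, of 0] by simp
  next
    case MInf
    then show ?thesis by simp
  qed
  have step3: "L - ereal H \<le> R0"
    unfolding R0_def
  proof (rule INF_greatest)
    fix \<rho> assume r: "\<rho> \<in> Gamma n \<beta>"
    show "L - ereal H \<le> ereal (F n a (\<lambda>_. 0) \<rho>)"
      using step2[OF r] by (cases L) auto
  qed
  have "L \<le> R0 + ereal H"
    using step3 by (cases L; cases R0) auto
  then show ?thesis unfolding L_def R0_def H_def h_def .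
qed

end
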